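(* Fix $\nu\in(0,1]$, $k\in\mathbb{N}$ and $\lambda_1,\dots,\lambda_k>0$, and let $\{M^{\nu}(t);t\ge 0\}$ be a counting process whose distribution $p_j^{\nu}(t)=\mathbb{P}\{M^{\nu}(t)=j\}$, $j\in\mathbb{N}_0$, satisfies the fractional system described in the context together with $p_0^\nu(0)=1$, $p_j^\nu(0)=0$ for $j\ge1$. Then \[ \mathbb{E}\left[e^{sM^{\nu}(t)}\right]=E_{\nu,1}\Big(\sum_{j=1}^k\lambda_j\left(e^{js}-1\right)t^{\nu}\Big),\qquad t\ge0,\ s\in\mathbb{R}. \]
   Context: The fractional derivative is the Caputo derivative: for $0<\nu<1$, $\frac{d^\nu f(t)}{dt^\nu}=\frac{1}{\Gamma(1-\nu)}\int_0^t \frac{f'(s)}{(t-s)^{\nu}}\,ds$, and for $\nu=1$ it is the ordinary derivative $f'(t)$. With $\Lambda=\lambda_1+\dots+\lambda_k$, the system is: $\frac{d^\nu p_0^\nu(t)}{dt^\nu}=-\Lambda p_0^\nu(t)$; $\frac{d^\nu p_j^\nu(t)}{dt^\nu}=\sum_{r=1}^{j}\lambda_r p_{j-r}^\nu(t)-\Lambda p_j^\nu(t)$ for $j=1,\dots,k-1$; $\frac{d^\nu p_j^\nu(t)}{dt^\nu}=\sum_{r=1}^{k}\lambda_r p_{j-r}^\nu(t)-\Lambda p_j^\nu(t)$ for $j\ge k$. $E_{\alpha,\beta}(x)=\sum_{r\ge0}\frac{x^r}{\Gamma(\alpha r+\beta)}$ is the two-parameter Mittag-Leffler function. *)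

theory Defs
  imports "HOL-Probability.Probability"
begin

definition mittag_leffler :: "real \<Rightarrow> real \<Rightarrow> real \<Rightarrow> real" where
  "mittag_leffler \<alpha> \<beta> x = (\<Sum>r. x ^ r / Gamma (\<alpha> * real r + \<beta>))"

definition has_caputo_derivative :: "real \<Rightarrow> (real \<Rightarrow> real) \<Rightarrow> real \<Rightarrow> real \<Rightarrow> bool" where
  "has_caputo_derivative \<nu> f t D \<longleftrightarrow>
     (if \<nu> = 1 then (f has_real_derivative D) (at t)
      else (\<forall>s\<in>{0<..<t}. f differentiable (at s)) \<and>
           (\<exists>I. ((\<lambda>s. deriv f s * (t - s) powr (- \<nu>)) has_integral I) {0..t} \<and>
                D = I / Gamma (1 - \<nu>)))"

end

theory Submission
  imports Defs "HOL-Computational_Algebra.Polynomial"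
begin


lemma Gamma_lower:
  fixes x :: real assumes x: "x \<ge> 1"
  shows "Gamma (x + 1) \<ge> x powr x * exp (-2*x)"
proof -
  have G: "((\<lambda>u. u powr x / exp u) has_integral Gamma (x+1)) {0..}"
    using Gamma_integral_real[of "x+1"] x by simp
  have cont: "continuous_on {x..2*x} (\<lambda>u. u powr x / exp u)"
    using x by (intro continuous_intros) auto
  then have I: "((\<lambda>u. u powr x / exp u) has_integral integral {x..2*x} (\<lambda>u. u powr x / exp u)) {x..2*x}"
    using integrable_continuous_interval by blast
  have "integral {x..2*x} (\<lambda>u. u powr x / exp u) \<le> Gamma (x+1)"
    by (rule has_integral_subset_le[OF _ I G]) (use x in auto)
  moreover have "x * (x powr x * exp (-2*x)) \<le> integral {x..2*x} (\<lambda>u. u powr x / exp u)"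
  proof -
    have c: "((\<lambda>u. x powr x * exp (-2*x)) has_integral (2*x - x) * (x powr x * exp (-2*x))) {x..2*x}"
      using has_integral_const_real[of "x powr x * exp (-2*x)" x "2*x"] x by simp
    have "(2*x - x) * (x powr x * exp (-2*x)) \<le> integral {x..2*x} (\<lambda>u. u powr x / exp u)"
    proof (rule has_integral_le[OF c I])
      fix u assume u: "u \<in> {x..2*x}"
      have "x powr x \<le> u powr x" using u x by (intro powr_mono2) auto
      moreover have "exp (-2*x) \<le> inverse (exp u)" using u by (simp add: exp_minus[symmetric])
      ultimately have "x powr x * exp (-2*x) \<le> u powr x * inverse (exp u)"
        by (intro mult_mono) auto
      then show "x powr x * exp (-2*x) \<le> u powr x / exp u" by (simp add: divide_inverse)
    qed
    then show ?thesis by simp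
  qed
  moreover have "x powr x * exp (-2*x) \<le> x * (x powr x * exp (-2*x))"
    using mult_right_mono[OF x, of "x powr x * exp (-2*x)"] by simp
  ultimately show ?thesis by linarith
qed

lemma ml_summable:
  fixes \<nu> z :: real assumes nu: "\<nu> > 0"
  shows "summable (\<lambda>n. \<bar>z\<bar>^n / Gamma (\<nu> * real n + 1))"
proof (rule summable_comparison_test'[where g = "\<lambda>n. (1/2)^n"])
  show "summable (\<lambda>n. (1/2::real)^n)" by (rule summable_geometric) auto
  define C where "C = 2 * (\<bar>z\<bar> + 1) * exp (2*\<nu>)"
  have Cpos: "C > 0" unfolding C_def by (auto intro!: mult_pos_pos add_nonneg_pos)
  define N where "N = nat \<lceil>(max 1 (C powr (1/\<nu>))) / \<nu>\<rceil>"
  show "norm (\<bar>z\<bar>^n / Gamma (\<nu> * real n + 1)) \<le> (1/2)^n" if n: "n \<ge> N" for n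
  proof -
    have "real n \<ge> (max 1 (C powr (1/\<nu>))) / \<nu>" using n unfolding N_def by linarith
    then have nn: "\<nu> * real n \<ge> max 1 (C powr (1/\<nu>))" using nu by (simp add: field_simps)
    define x where "x = \<nu> * real n"
    have x1: "x \<ge> 1" using nn x_def by auto
    have "C = (C powr (1/\<nu>)) powr \<nu>" using Cpos nu by (simp add: powr_powr)
    also have "\<dots> \<le> x powr \<nu>" using nn x_def nu Cpos by (intro powr_mono2) auto
    finally have Cx: "C \<le> x powr \<nu>" .
    have Gpos: "Gamma (x+1) > 0" using x1 by (intro Gamma_real_pos) auto
    have "x powr x * exp (-2*x) = (x powr \<nu> * exp (-2*\<nu>))^n"
    proof -
      have a: "(x powr \<nu>)^n = x powr x"
      proof -
        have "(x powr \<nu>)^n = (x powr \<nu>) powr (real n)"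
          using x1 by (subst powr_realpow) auto
        also have "\<dots> = x powr x" by (simp add: powr_powr x_def)
        finally show ?thesis .
      qed
      have b: "exp (-2*\<nu>)^n = exp (-2*x)"
        by (simp add: exp_of_nat_mult[symmetric] x_def mult_ac)
      show ?thesis unfolding power_mult_distrib a b ..
    qed
    also have "\<dots> \<ge> (C * exp (-2*\<nu>))^n" using Cx Cpos by (intro power_mono mult_right_mono) auto
    finally have "(C * exp (-2*\<nu>))^n \<le> Gamma (x+1)" using Gamma_lower[OF x1] by linarith
    moreover have "C * exp (-2*\<nu>) = 2 * (\<bar>z\<bar>+1)" unfolding C_def by (simp add: exp_minus field_simps)
    ultimately have G: "(2*(\<bar>z\<bar>+1))^n \<le> Gamma (x+1)" by simp
    have "\<bar>z\<bar>^n / Gamma (x+1) \<le> \<bar>z\<bar>^n / (2*(\<bar>z\<bar>+1))^n"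
      using Gpos by (intro divide_left_mono[OF G]) (auto intro!: mult_pos_pos)
    also have "\<dots> = (\<bar>z\<bar> / (2*(\<bar>z\<bar>+1)))^n" by (simp add: power_divide)
    also have "\<dots> \<le> (1/2)^n" by (intro power_mono) (auto simp: field_simps)
    finally show ?thesis using Gpos by (simp add: x_def)
  qed
qed


definition Lam :: "nat \<Rightarrow> (nat \<Rightarrow> real) \<Rightarrow> real" where
  "Lam k lam = (\<Sum>r=1..k. lam r)"
definition Pp :: "nat \<Rightarrow> (nat \<Rightarrow> real) \<Rightarrow> real poly" where
  "Pp k lam = (\<Sum>r\<in>{1..k}. monom (lam r) r) - [:Lam k lam:]"
definition Wp :: "nat \<Rightarrow> (nat \<Rightarrow> real) \<Rightarrow> real poly" where
  "Wp k lam = (\<Sum>r\<in>{1..k}. monom (lam r) r) + [:Lam k lam:]"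
definition Aop :: "nat \<Rightarrow> (nat \<Rightarrow> real) \<Rightarrow> (nat \<Rightarrow> real) \<Rightarrow> nat \<Rightarrow> real" where
  "Aop k lam x j = (if j < k then (\<Sum>r=1..j. lam r * x (j - r)) else (\<Sum>r=1..k. lam r * x (j - r)))
           - Lam k lam * x j"

lemma coeff_sum_monom: "coeff (\<Sum>r\<in>{1..k}. monom (lam r) r) i = (if i \<in> {1..k} then lam i else 0)"
  by (simp add: coeff_sum coeff_monom)

lemma coeff_Pp: "coeff (Pp k lam) i = (if i \<in> {1..k} then lam i else 0) - (if i = 0 then Lam k lam else 0)"
  unfolding Pp_def coeff_diff coeff_sum_monom by (cases i) auto

lemma coeff_Wp: "coeff (Wp k lam) i = (if i \<in> {1..k} then lam i else 0) + (if i = 0 then Lam k lam else 0)"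
  unfolding Wp_def coeff_add coeff_sum_monom by (cases i) auto

lemma poly_Pp: "poly (Pp k lam) y = (\<Sum>r=1..k. lam r * y ^ r) - Lam k lam"
  by (simp add: Pp_def poly_sum poly_monom)

lemma poly_Wp: "poly (Wp k lam) y = (\<Sum>r=1..k. lam r * y ^ r) + Lam k lam"
  by (simp add: Wp_def poly_sum poly_monom)

lemma coeff_Pp_pow_Suc:
  "coeff (Pp k lam ^ Suc n) j = Aop k lam (\<lambda>i. coeff (Pp k lam ^ n) i) j"
proof -
  let ?Q = "\<lambda>i. coeff (Pp k lam ^ n) i"
  have "coeff (Pp k lam ^ Suc n) j = (\<Sum>i\<le>j. coeff (Pp k lam) i * ?Q (j - i))"
    by (simp add: coeff_mult)
  also have "\<dots> = (\<Sum>i\<le>j. (if i \<in> {1..k} then lam i * ?Q (j - i) else 0))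
                   - (\<Sum>i\<le>j. (if i = 0 then Lam k lam * ?Q (j - i) else 0))"
    unfolding sum_subtractf[symmetric] by (rule sum.cong) (auto simp: coeff_Pp left_diff_distrib)
  also have "(\<Sum>i\<le>j. (if i = 0 then Lam k lam * ?Q (j - i) else 0)) = Lam k lam * ?Q j"
    by (subst sum.delta) auto
  also have "(\<Sum>i\<le>j. (if i \<in> {1..k} then lam i * ?Q (j - i) else 0))
        = (\<Sum>i\<in>{..j} \<inter> {1..k}. lam i * ?Q (j - i))"
    by (rule sum.inter_restrict[symmetric]) simp
  also have "{..j} \<inter> {1..k} = (if j < k then {1..j} else {1..k})" by auto
  finally show ?thesis by (simp add: Aop_def)
qed

lemma coeff_abs_mult:
  fixes p q p' q' :: "real poly"
  assumes "\<And>i. \<bar>coeff p i\<bar> \<le> coeff q i" "\<And>i. \<bar>coeff p' i\<bar> \<le> coeff q' i"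
  shows "\<bar>coeff (p * p') i\<bar> \<le> coeff (q * q') i"
proof -
  have "\<bar>coeff (p * p') i\<bar> = \<bar>\<Sum>m\<le>i. coeff p m * coeff p' (i - m)\<bar>" by (simp add: coeff_mult)
  also have "\<dots> \<le> (\<Sum>m\<le>i. \<bar>coeff p m\<bar> * \<bar>coeff p' (i - m)\<bar>)"
    by (rule order_trans[OF sum_abs]) (simp add: abs_mult)
  also have "\<dots> \<le> (\<Sum>m\<le>i. coeff q m * coeff q' (i - m))"
    by (intro sum_mono mult_mono assms) (auto intro: order_trans[OF abs_ge_zero assms(1)])
  also have "\<dots> = coeff (q * q') i" by (simp add: coeff_mult)
  finally show ?thesis .
qed

lemma coeff_abs_pow:
  fixes p q :: "real poly"
  assumes "\<And>i. \<bar>coeff p i\<bar> \<le> coeff q i"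
  shows "\<bar>coeff (p ^ n) i\<bar> \<le> coeff (q ^ n) i"
proof (induction n arbitrary: i)
  case 0 then show ?case by (simp add: coeff_1)
next
  case (Suc n) then show ?case by (simp add: coeff_abs_mult assms)
qed

lemma Lam_nonneg: "(\<And>r. r \<in> {1..k} \<Longrightarrow> lam r > 0) \<Longrightarrow> Lam k lam \<ge> 0"
  unfolding Lam_def by (intro sum_nonneg) (auto intro: less_imp_le)

lemma coeff_Pp_le_Wp:
  assumes "\<And>r. r \<in> {1..k} \<Longrightarrow> lam r > 0"
  shows "\<bar>coeff (Pp k lam ^ n) i\<bar> \<le> coeff (Wp k lam ^ n) i"
proof (rule coeff_abs_pow)
  fix i
  show "\<bar>coeff (Pp k lam) i\<bar> \<le> coeff (Wp k lam) i"
    using assms[of i] Lam_nonneg[of k lam, OF assms] by (auto simp: coeff_Pp coeff_Wp)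
qed

lemma poly_sum_le:
  fixes p :: "real poly"
  assumes "degree p \<le> M"
  shows "poly p x = (\<Sum>i\<le>M. coeff p i * x ^ i)"
proof -
  have "poly p x = (\<Sum>i\<le>degree p. coeff p i * x ^ i)" by (rule poly_altdef)
  also have "\<dots> = (\<Sum>i\<le>M. coeff p i * x ^ i)"
    by (rule sum.mono_neutral_left) (use assms in \<open>auto simp: coeff_eq_0\<close>)
  finally show ?thesis .
qed

lemma coeff_Pp_sum_bound:
  assumes "\<And>r. r \<in> {1..k} \<Longrightarrow> lam r > 0" and y: "y \<ge> 0"
  shows "(\<Sum>j\<le>N. \<bar>coeff (Pp k lam ^ n) j\<bar> * y ^ j) \<le> poly (Wp k lam) y ^ n"
proof -
  let ?W = "Wp k lam ^ n"
  have "(\<Sum>j\<le>N. \<bar>coeff (Pp k lam ^ n) j\<bar> * y ^ j) \<le> (\<Sum>j\<le>N. coeff ?W j * y ^ j)"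
    by (intro sum_mono mult_right_mono coeff_Pp_le_Wp assms) (use y in auto)
  also have "\<dots> \<le> (\<Sum>j\<le>max N (degree ?W). coeff ?W j * y ^ j)"
    by (intro sum_mono2) (auto intro!: mult_nonneg_nonneg order_trans[OF abs_ge_zero coeff_Pp_le_Wp[OF assms(1)]] simp: y)
  also have "\<dots> = poly ?W y" by (rule poly_sum_le[symmetric]) auto
  finally show ?thesis by (simp add: poly_power)
qed

lemma coeff_Pp_bound:
  assumes "\<And>r. r \<in> {1..k} \<Longrightarrow> lam r > 0"
  shows "\<bar>coeff (Pp k lam ^ n) j\<bar> \<le> (2 * Lam k lam) ^ n"
proof -
  have "\<bar>coeff (Pp k lam ^ n) j\<bar> * 1 ^ j \<le> (\<Sum>i\<le>j. \<bar>coeff (Pp k lam ^ n) i\<bar> * 1 ^ i)"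
    by (rule member_le_sum) auto
  then have "\<bar>coeff (Pp k lam ^ n) j\<bar> \<le> (\<Sum>i\<le>j. \<bar>coeff (Pp k lam ^ n) i\<bar> * 1 ^ i)" by simp
  also have "\<dots> \<le> poly (Wp k lam) 1 ^ n" by (rule coeff_Pp_sum_bound[OF assms]) auto
  also have "poly (Wp k lam) 1 = 2 * Lam k lam" by (simp add: poly_Wp Lam_def)
  finally show ?thesis .
qed


lemma beta_scaled:
  fixes a b t :: real
  assumes a: "a > 0" and b: "b > 0" and t: "t > 0"
  shows "((\<lambda>s. s powr (a - 1) * (t - s) powr (b - 1)) has_integral (t powr (a + b - 1) * Beta a b)) {0..t}"
proof -
  let ?f = "\<lambda>u. u powr (a - 1) * (1 - u) powr (b - 1)"
  have B: "(?f has_integral Beta a b) {0..1}" by (rule has_integral_Beta_real[OF a b])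
  have "((\<lambda>x. ?f ((1/t) * x + 0)) has_integral (1 / \<bar>1/t\<bar>) *\<^sub>R Beta a b) ((\<lambda>x. x / (1/t) - 0 / (1/t)) ` {0..1})"
    by (rule has_integral_affinity01[OF B]) (use t in auto)
  moreover have "(\<lambda>x. x / (1/t) - 0 / (1/t)) ` {0..1} = {0..t}"
    using image_affinity_atLeastAtMost_div[of "1/t" 0 0 1] t by simp
  ultimately have I: "((\<lambda>x. ?f (x / t)) has_integral t * Beta a b) {0..t}" using t by simp
  have "((\<lambda>x. t powr (a + b - 2) * ?f (x / t)) has_integral t powr (a + b - 2) * (t * Beta a b)) {0..t}"
    by (rule has_integral_mult_right[OF I])
  moreover have "t powr (a + b - 2) * (t * Beta a b) = t powr (a + b - 1) * Beta a b"
  proof -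
    have "t powr (a + b - 1) = t powr ((a + b - 2) + 1)" by simp
    also have "\<dots> = t powr (a + b - 2) * t powr 1" by (rule powr_add)
    finally have "t powr (a + b - 2) * t = t powr (a + b - 1)" using t by simp
    then show ?thesis by (simp add: mult_ac)
  qed
  ultimately have I2: "((\<lambda>x. t powr (a + b - 2) * ?f (x / t)) has_integral t powr (a + b - 1) * Beta a b) {0..t}"
    by simp
  show ?thesis
  proof (rule has_integral_eq[OF _ I2])
    fix s assume s: "s \<in> {0..t}"
    have "?f (s / t) = s powr (a - 1) / t powr (a - 1) * ((t - s) powr (b - 1) / t powr (b - 1))"
    proof -
      have "1 - s / t = (t - s) / t" using t by (simp add: field_simps)
      then show ?thesis using s t by (simp add: powr_divide)
    qed
    moreover have "t powr (a + b - 2) = t powr (a - 1) * t powr (b - 1)"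
      using t by (simp add: powr_add[symmetric])
    ultimately show "t powr (a + b - 2) * ?f (s / t) = s powr (a - 1) * (t - s) powr (b - 1)"
      using t by (simp add: field_simps)
  qed
qed

lemma has_integral_series:
  fixes c :: "nat \<Rightarrow> real" and h :: "nat \<Rightarrow> real \<Rightarrow> real" and J :: "nat \<Rightarrow> real"
  assumes hint: "\<And>n. (h n has_integral J n) {a..b}"
    and hnn: "\<And>n x. x \<in> {a..b} \<Longrightarrow> h n x \<ge> 0"
    and sumJ: "summable (\<lambda>n. \<bar>c n\<bar> * J n)"
    and sumx: "\<And>x. x \<in> {a..b} \<Longrightarrow> summable (\<lambda>n. \<bar>c n\<bar> * h n x)"
  shows "((\<lambda>x. \<Sum>n. c n * h n x) has_integral (\<Sum>n. c n * J n)) {a..b}"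
proof -
  define F where "F n x = indicator {a..b} x * (c n * h n x)" for n x
  have ai: "set_integrable lebesgue {a..b} (h n)" for n
    using nonnegative_absolutely_integrable_1[of "h n" "{a..b}"] hint hnn by blast
  have LJ: "set_lebesgue_integral lebesgue {a..b} (h n) = J n" for n
    using has_integral_set_lebesgue[OF ai[of n]] hint[of n] has_integral_unique by blast
  have Fint: "integrable lebesgue (F n)" for n
  proof -
    have "set_integrable lebesgue {a..b} (\<lambda>x. c n * h n x)"
      using ai[of n] by (rule set_integrable_mult_right)
    then show ?thesis unfolding F_def[abs_def] set_integrable_def by simp
  qed
  have NF: "(LINT x|lebesgue. norm (F n x)) = \<bar>c n\<bar> * J n" for n
  proof -
    have "(LINT x|lebesgue. norm (F n x)) = (LINT x|lebesgue. \<bar>c n\<bar> * (indicator {a..b} x * h n x))"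
      by (rule Bochner_Integration.integral_cong) (auto simp: F_def indicator_def abs_mult hnn)
    also have "\<dots> = \<bar>c n\<bar> * (LINT x|lebesgue. indicator {a..b} x * h n x)" by simp
    also have "(LINT x|lebesgue. indicator {a..b} x * h n x) = J n"
      using LJ[of n] by (simp add: set_lebesgue_integral_def)
    finally show ?thesis .
  qed
  have AE: "AE x in lebesgue. summable (\<lambda>n. norm (F n x))"
  proof (rule AE_I2)
    fix x show "summable (\<lambda>n. norm (F n x))"
    proof (cases "x \<in> {a..b}")
      case True
      then show ?thesis using sumx[OF True] hnn[OF True] by (simp add: F_def abs_mult)
    next
      case False then show ?thesis by (simp add: F_def)
    qed
  qed
  have sumN: "summable (\<lambda>n. LINT x|lebesgue. norm (F n x))" unfolding NF by (rule sumJ)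
  have int: "integrable lebesgue (\<lambda>x. \<Sum>n. F n x)" by (rule integrable_suminf[OF Fint AE sumN])
  have val: "(LINT x|lebesgue. (\<Sum>n. F n x)) = (\<Sum>n. LINT x|lebesgue. F n x)"
    by (rule integral_suminf[OF Fint AE sumN])
  have LF: "(LINT x|lebesgue. F n x) = c n * J n" for n
  proof -
    have "(LINT x|lebesgue. F n x) = (LINT x|lebesgue. c n * (indicator {a..b} x * h n x))"
      by (rule Bochner_Integration.integral_cong) (auto simp: F_def)
    also have "\<dots> = c n * J n" using LJ[of n] by (simp add: set_lebesgue_integral_def)
    finally show ?thesis .
  qed
  have sumc: "summable (\<lambda>n. c n * h n x)" if "x \<in> {a..b}" for x
    by (rule summable_rabs_cancel) (use sumx[OF that] hnn[OF that] in \<open>simp add: abs_mult\<close>)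
  have eqF: "(\<Sum>n. F n x) = indicator {a..b} x * (\<Sum>n. c n * h n x)" for x
  proof (cases "x \<in> {a..b}")
    case True then show ?thesis by (simp add: F_def)
  next
    case False then show ?thesis by (simp add: F_def)
  qed
  have SI: "set_integrable lebesgue {a..b} (\<lambda>x. \<Sum>n. c n * h n x)"
    using int unfolding set_integrable_def eqF by simp
  have "((\<lambda>x. \<Sum>n. c n * h n x) has_integral set_lebesgue_integral lebesgue {a..b} (\<lambda>x. \<Sum>n. c n * h n x)) {a..b}"
    by (rule has_integral_set_lebesgue[OF SI])
  moreover have "set_lebesgue_integral lebesgue {a..b} (\<lambda>x. \<Sum>n. c n * h n x) = (\<Sum>n. c n * J n)"
    using val unfolding set_lebesgue_integral_def by (simp add: eqF LF)
  ultimately show ?thesis by simp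
qed


lemma Aop_scale: "Aop k lam (\<lambda>i. c * f i) j = c * Aop k lam f j"
  by (simp add: Aop_def sum_distrib_left algebra_simps)

lemma suminf_Aop:
  assumes "\<And>i. summable (\<lambda>n. f n i)"
  shows "(\<Sum>n. Aop k lam (\<lambda>i. f n i) j) = Aop k lam (\<lambda>i. \<Sum>n. f n i) j"
proof -
  define S where "S = (if j < k then {1..j} else {1..k})"
  have A: "Aop k lam g j = (\<Sum>r\<in>S. lam r * g (j - r)) - Lam k lam * g j" for g
    by (simp add: Aop_def S_def)
  have s1: "summable (\<lambda>n. \<Sum>r\<in>S. lam r * f n (j - r))"
    by (intro summable_sum summable_mult assms)
  have s2: "summable (\<lambda>n. Lam k lam * f n j)" by (intro summable_mult assms)
  show ?thesis unfolding A
    by (subst suminf_diff[OF s1 s2, symmetric])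
       (simp add: suminf_sum summable_mult assms suminf_mult)
qed

locale fsys =
  fixes nu :: real and k :: nat and lam :: "nat \<Rightarrow> real"
  assumes nu_pos: "0 < nu" and nu_le: "nu \<le> 1" and lam_pos: "\<And>r. r \<in> {1..k} \<Longrightarrow> lam r > 0"
begin

definition cc :: "nat \<Rightarrow> nat \<Rightarrow> real" where "cc n j = coeff (Pp k lam ^ n) j"
definition aa :: "nat \<Rightarrow> nat \<Rightarrow> real" where "aa j n = cc n j / Gamma (nu * real n + 1)"
definition QQ :: "nat \<Rightarrow> real \<Rightarrow> real" where "QQ j x = (\<Sum>n. aa j n * x ^ n)"
definition QD :: "nat \<Rightarrow> real \<Rightarrow> real" where "QD j x = (\<Sum>n. diffs (aa j) n * x ^ n)"
definition qq :: "nat \<Rightarrow> real \<Rightarrow> real" where "qq j t = QQ j (t powr nu)"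
definition RR :: "nat \<Rightarrow> real \<Rightarrow> real" where "RR j x = (\<Sum>n. cc (Suc n) j * x ^ n / Gamma (nu * real n + 1))"

lemma L_nonneg: "Lam k lam \<ge> 0" using Lam_nonneg[of k lam] lam_pos by blast

lemma Gpos: "Gamma (nu * real n + 1) > 0"
  using nu_pos by (intro Gamma_real_pos) (auto intro: add_nonneg_pos)

lemma cc_bound: "\<bar>cc n j\<bar> \<le> (2 * Lam k lam) ^ n"
  unfolding cc_def by (rule coeff_Pp_bound[OF lam_pos])

lemma ml_sum_scaled: "summable (\<lambda>n. (2 * Lam k lam * \<bar>x\<bar>) ^ n / Gamma (nu * real n + 1))"
  using ml_summable[OF nu_pos, of "2 * Lam k lam * \<bar>x\<bar>"] L_nonneg by (simp add: abs_mult)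

lemma aa_summable_abs: "summable (\<lambda>n. \<bar>aa j n * x ^ n\<bar>)"
proof (rule summable_comparison_test'[OF ml_sum_scaled])
  fix n
  have "\<bar>aa j n * x ^ n\<bar> = \<bar>cc n j\<bar> * \<bar>x\<bar> ^ n / Gamma (nu * real n + 1)"
    using Gpos[of n] by (simp add: aa_def abs_mult power_abs)
  also have "\<dots> \<le> (2 * Lam k lam) ^ n * \<bar>x\<bar> ^ n / Gamma (nu * real n + 1)"
    using Gpos[of n] by (intro divide_right_mono mult_right_mono cc_bound) auto
  finally show "norm \<bar>aa j n * x ^ n\<bar> \<le> (2 * Lam k lam * \<bar>x\<bar>) ^ n / Gamma (nu * real n + 1)"
    by (simp add: power_mult_distrib)
qed

lemma aa_summable: "summable (\<lambda>n. aa j n * x ^ n)"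
  by (rule summable_rabs_cancel[OF aa_summable_abs])

lemma QQ_deriv: "(QQ j has_real_derivative QD j x) (at x)"
  unfolding QQ_def[abs_def] QD_def
  by (rule termdiffs_strong_converges_everywhere[OF aa_summable])

lemma QD_summable_abs: "summable (\<lambda>n. \<bar>diffs (aa j) n * x ^ n\<bar>)"
proof -
  have "summable (\<lambda>n. \<bar>aa j n\<bar> * y ^ n)" for y
    by (rule summable_rabs_cancel) (use aa_summable_abs[of j y] in \<open>simp add: abs_mult\<close>)
  then have "summable (\<lambda>n. diffs (\<lambda>n. \<bar>aa j n\<bar>) n * \<bar>x\<bar> ^ n)"
    by (rule termdiff_converges_all)
  then show ?thesis by (simp add: diffs_def abs_mult power_abs)
qed

lemma QD_summable: "summable (\<lambda>n. diffs (aa j) n * x ^ n)"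
  by (rule summable_rabs_cancel[OF QD_summable_abs])

lemma RR_summable_abs: "summable (\<lambda>n. \<bar>cc (Suc n) j * x ^ n / Gamma (nu * real n + 1)\<bar>)"
proof -
  have "summable (\<lambda>n. (2 * Lam k lam) * ((2 * Lam k lam * \<bar>x\<bar>) ^ n / Gamma (nu * real n + 1)))"
    by (intro summable_mult ml_sum_scaled)
  moreover have "norm \<bar>cc (Suc n) j * x ^ n / Gamma (nu * real n + 1)\<bar> \<le> (2 * Lam k lam) * ((2 * Lam k lam * \<bar>x\<bar>) ^ n / Gamma (nu * real n + 1))" for n
  proof -
    have "\<bar>cc (Suc n) j * x ^ n / Gamma (nu * real n + 1)\<bar> = \<bar>cc (Suc n) j\<bar> * \<bar>x\<bar> ^ n / Gamma (nu * real n + 1)"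
      using Gpos[of n] by (simp add: abs_mult power_abs)
    also have "\<dots> \<le> (2 * Lam k lam) ^ Suc n * \<bar>x\<bar> ^ n / Gamma (nu * real n + 1)"
      using Gpos[of n] by (intro divide_right_mono mult_right_mono cc_bound) auto
    finally show ?thesis by (simp add: power_mult_distrib)
  qed
  ultimately show ?thesis by (rule summable_comparison_test')
qed

lemma RR_Aop: "RR j x = Aop k lam (\<lambda>i. QQ i x) j"
proof -
  have "RR j x = (\<Sum>n. Aop k lam (\<lambda>i. aa i n * x ^ n) j)"
    unfolding RR_def
  proof (rule suminf_cong)
    fix n
    have "cc (Suc n) j = Aop k lam (\<lambda>i. cc n i) j" unfolding cc_def by (rule coeff_Pp_pow_Suc)
    then have "cc (Suc n) j * x ^ n / Gamma (nu * real n + 1)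
        = (x ^ n / Gamma (nu * real n + 1)) * Aop k lam (\<lambda>i. cc n i) j" by simp
    also have "\<dots> = Aop k lam (\<lambda>i. (x ^ n / Gamma (nu * real n + 1)) * cc n i) j"
      by (rule Aop_scale[symmetric])
    finally show "cc (Suc n) j * x ^ n / Gamma (nu * real n + 1) = Aop k lam (\<lambda>i. aa i n * x ^ n) j"
      by (simp add: aa_def mult_ac)
  qed
  also have "\<dots> = Aop k lam (\<lambda>i. QQ i x) j"
    unfolding QQ_def by (rule suminf_Aop[OF aa_summable])
  finally show ?thesis .
qed

lemma qq_deriv:
  assumes t: "t > 0"
  shows "(qq j has_real_derivative QD j (t powr nu) * (nu * t powr (nu - 1))) (at t)"
proof -
  have "((\<lambda>t. QQ j (t powr nu)) has_real_derivative QD j (t powr nu) * (nu * t powr (nu - 1))) (at t)"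
    by (rule DERIV_chain2[OF QQ_deriv has_real_derivative_powr[OF t]])
  then show ?thesis unfolding qq_def[abs_def] .
qed

lemma qq_0: "qq j 0 = (if j = 0 then 1 else 0)"
proof -
  have "QQ j 0 = aa j 0" unfolding QQ_def by (rule powser_zero)
  then show ?thesis using nu_pos by (simp add: qq_def aa_def cc_def)
qed

lemma qq_cont: "continuous_on {0..} (qq j)"
proof -
  have c1: "continuous_on {0..} (\<lambda>t::real. t powr nu)"
    using nu_pos by (intro continuous_on_powr' continuous_intros) auto
  have c2: "continuous_on UNIV (QQ j)"
    using QQ_deriv DERIV_isCont continuous_at_imp_continuous_on by blast
  show ?thesis unfolding qq_def[abs_def]
    by (rule continuous_on_compose2[OF c2 c1]) auto
qed

end


context fsys begin

lemma Beta_nonneg: "(a::real) > 0 \<Longrightarrow> b > 0 \<Longrightarrow> Beta a b \<ge> 0"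
  using Gamma_real_pos[of a] Gamma_real_pos[of b] Gamma_real_pos[of "a+b"] by (simp add: Beta_def)

lemma pos_not_nonpos_Int: "(x::real) > 0 \<Longrightarrow> x \<notin> \<int>\<^sub>\<le>\<^sub>0"
  by (auto elim!: nonpos_Ints_cases)

lemma powr_split:
  fixes s :: real assumes s: "s > 0"
  shows "s powr (nu * real (Suc n) - 1) = (s powr nu) ^ n * s powr (nu - 1)"
proof -
  have "s powr (nu * real (Suc n) - 1) = s powr (nu * real n + (nu - 1))" by (simp add: algebra_simps)
  also have "\<dots> = s powr (nu * real n) * s powr (nu - 1)" by (rule powr_add)
  also have "s powr (nu * real n) = (s powr nu) ^ n"
    using s by (simp add: powr_realpow[symmetric] powr_powr)
  finally show ?thesis .
qed

lemma qq_caputo1: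
  assumes nu1: "nu = 1" and t: "t > 0"
  shows "has_caputo_derivative nu (qq j) t (Aop k lam (\<lambda>i. qq i t) j)"
proof -
  have d: "(qq j has_real_derivative QD j t) (at t)"
    using qq_deriv[OF t, of j] t nu1 by simp
  have "QD j t = RR j t"
    unfolding QD_def RR_def
  proof (rule suminf_cong)
    fix n
    define m where "m = real (Suc n)"
    have m: "m > 0" by (simp add: m_def)
    have G: "Gamma (m + 1) = m * Gamma (real n + 1)"
      using Gamma_plus1[OF pos_not_nonpos_Int[OF m]] by (simp add: m_def add_ac)
    have Gp: "Gamma (real n + 1) > 0" by (intro Gamma_real_pos) auto
    have "diffs (aa j) n = m * (cc (Suc n) j / Gamma (m + 1))"
      unfolding diffs_def aa_def m_def using nu1 by simp
    also have "\<dots> = cc (Suc n) j / Gamma (real n + 1)" unfolding G using m Gp by (simp add: field_simps)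
    finally show "diffs (aa j) n * t ^ n = cc (Suc n) j * t ^ n / Gamma (nu * real n + 1)"
      using nu1 by simp
  qed
  also have "\<dots> = Aop k lam (\<lambda>i. QQ i t) j" by (rule RR_Aop)
  also have "(\<lambda>i. QQ i t) = (\<lambda>i. qq i t)" unfolding qq_def using t nu1 by simp
  finally show ?thesis using d nu1 by (simp add: has_caputo_derivative_def)
qed

lemma qq_caputo_frac:
  assumes nu1: "nu < 1" and t: "t > 0"
  shows "has_caputo_derivative nu (qq j) t (Aop k lam (\<lambda>i. qq i t) j)"
proof -
  define h where "h n s = s powr (nu * real (Suc n) - 1) * (t - s) powr ((1 - nu) - 1)" for n s
  define J where "J n = t powr (nu * real (Suc n) + (1 - nu) - 1) * Beta (nu * real (Suc n)) (1 - nu)" for n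
  define c where "c n = diffs (aa j) n * nu" for n
  define RT where "RT n = cc (Suc n) j * (t powr nu) ^ n / Gamma (nu * real n + 1)" for n
  have G1: "Gamma (1 - nu) > 0" using nu1 by (intro Gamma_real_pos) auto
  have hint: "(h n has_integral J n) {0..t}" for n
    unfolding h_def J_def by (rule beta_scaled) (use nu_pos nu1 t in auto)
  have hnn: "h n s \<ge> 0" for n s by (simp add: h_def)
  have key: "c n * J n = Gamma (1 - nu) * RT n" for n
  proof -
    define m where "m = real (Suc n)"
    have m: "m > 0" by (simp add: m_def)
    have x: "nu * m > 0" using nu_pos m by simp
    have e1: "nu * m + (1 - nu) - 1 = nu * real n" by (simp add: m_def algebra_simps)
    have e2: "nu * m + (1 - nu) = nu * real n + 1" by (simp add: m_def algebra_simps)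
    have Gx: "Gamma (nu * m + 1) = (nu * m) * Gamma (nu * m)" by (rule Gamma_plus1[OF pos_not_nonpos_Int[OF x]])
    have g: "Gamma (m * nu) > 0" using x by (intro Gamma_real_pos) (simp add: mult.commute)
    have Gxp: "Gamma (nu * m) \<noteq> 0" "Gamma (m * nu) \<noteq> 0" using g by (simp_all add: mult.commute)
    have tp: "t powr (nu * real n) = (t powr nu) ^ n"
      using t by (simp add: powr_realpow[symmetric] powr_powr)
    have Gn: "Gamma (nu * real n + 1) > 0" by (rule Gpos)
    have "c n * J n = m * (cc (Suc n) j / Gamma (nu * m + 1)) * nu
          * (t powr (nu * real n) * (Gamma (nu * m) * Gamma (1 - nu) / Gamma (nu * real n + 1)))"
      unfolding c_def J_def diffs_def aa_def Beta_def m_def[symmetric] e1 e2 by simp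
    also have "\<dots> = Gamma (1 - nu) * RT n"
      unfolding RT_def Gx tp using Gxp m Gn nu_pos by (simp add: field_simps)
    finally show ?thesis .
  qed
  have Jnn: "J n \<ge> 0" for n using nu_pos nu1 by (simp add: J_def Beta_nonneg)
  have sumRT: "summable (\<lambda>n. \<bar>RT n\<bar>)" unfolding RT_def by (rule RR_summable_abs)
  have sumJ: "summable (\<lambda>n. \<bar>c n\<bar> * J n)"
  proof -
    have "\<bar>c n\<bar> * J n = Gamma (1 - nu) * \<bar>RT n\<bar>" for n
      using key[of n] Jnn[of n] G1 by (metis abs_mult abs_of_nonneg abs_of_pos)
    then show ?thesis using summable_mult[OF sumRT, of "Gamma (1 - nu)"] by simp
  qed
  have hsplit: "h n s = (s powr nu) ^ n * (s powr (nu - 1) * (t - s) powr (- nu))" if "s > 0" for n s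
    unfolding h_def powr_split[OF that] by simp
  have sumx: "summable (\<lambda>n. \<bar>c n\<bar> * h n s)" if s: "s \<in> {0..t}" for s
  proof (cases "s = 0")
    case True then show ?thesis by (simp add: h_def)
  next
    case False
    then have sp: "s > 0" using s by auto
    have "summable (\<lambda>n. \<bar>diffs (aa j) n * (s powr nu) ^ n\<bar> * (nu * (s powr (nu - 1) * (t - s) powr (- nu))))"
      by (intro summable_mult2 QD_summable_abs)
    moreover have "\<bar>c n\<bar> * h n s = \<bar>diffs (aa j) n * (s powr nu) ^ n\<bar> * (nu * (s powr (nu - 1) * (t - s) powr (- nu)))" for n
      unfolding hsplit[OF sp] c_def using nu_pos by (simp add: abs_mult mult_ac)
    ultimately show ?thesis by simp
  qed
  have S: "((\<lambda>s. \<Sum>n. c n * h n s) has_integral (\<Sum>n. c n * J n)) {0..t}"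
    by (rule has_integral_series[OF hint _ sumJ sumx]) (simp add: hnn)
  have SV: "(\<Sum>n. c n * J n) = Gamma (1 - nu) * RR j (t powr nu)"
    unfolding key RR_def RT_def[symmetric]
    by (rule suminf_mult[OF summable_rabs_cancel[OF sumRT]])
  have I: "((\<lambda>s. deriv (qq j) s * (t - s) powr (- nu)) has_integral Gamma (1 - nu) * RR j (t powr nu)) {0..t}"
  proof (rule has_integral_spike_finite[of "{0, t}", OF _ _ S[unfolded SV]])
    fix s assume s: "s \<in> {0..t} - {0, t}"
    then have sp: "s > 0" by auto
    have "deriv (qq j) s = QD j (s powr nu) * (nu * s powr (nu - 1))"
      by (rule DERIV_imp_deriv[OF qq_deriv[OF sp]])
    moreover have "(\<Sum>n. c n * h n s) = QD j (s powr nu) * (nu * (s powr (nu - 1) * (t - s) powr (- nu)))"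
      unfolding QD_def
      by (subst suminf_mult2[OF QD_summable]) (simp add: c_def hsplit[OF sp] mult_ac)
    ultimately show "deriv (qq j) s * (t - s) powr (- nu) = (\<Sum>n. c n * h n s)"
      by (simp add: mult_ac)
  qed simp
  have dif: "\<forall>s\<in>{0<..<t}. qq j differentiable (at s)"
    using qq_deriv unfolding real_differentiable_def by (auto intro!: exI)
  have "RR j (t powr nu) = Aop k lam (\<lambda>i. qq i t) j"
    unfolding RR_Aop qq_def ..
  then have "Aop k lam (\<lambda>i. qq i t) j = (Gamma (1 - nu) * RR j (t powr nu)) / Gamma (1 - nu)"
    using G1 by simp
  then show ?thesis
    unfolding has_caputo_derivative_def using nu1 dif I by auto
qed

lemma qq_caputo:
  assumes t: "t > 0"
  shows "has_caputo_derivative nu (qq j) t (Aop k lam (\<lambda>i. qq i t) j)"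
  using qq_caputo1[OF _ t] qq_caputo_frac[OF _ t] nu_le by fastforce

end


lemma caputo_diff:
  assumes f: "has_caputo_derivative nu f t D1" and g: "has_caputo_derivative nu g t D2" and t: "t > 0"
  shows "has_caputo_derivative nu (\<lambda>x. f x - g x) t (D1 - D2)"
proof (cases "nu = 1")
  case True
  then show ?thesis using f g by (auto simp: has_caputo_derivative_def intro!: DERIV_diff)
next
  case False
  from f False obtain I1 where df: "\<forall>s\<in>{0<..<t}. f differentiable (at s)"
    and I1: "((\<lambda>s. deriv f s * (t - s) powr (- nu)) has_integral I1) {0..t}" and D1: "D1 = I1 / Gamma (1 - nu)"
    by (auto simp: has_caputo_derivative_def)
  from g False obtain I2 where dg: "\<forall>s\<in>{0<..<t}. g differentiable (at s)"
    and I2: "((\<lambda>s. deriv g s * (t - s) powr (- nu)) has_integral I2) {0..t}" and D2: "D2 = I2 / Gamma (1 - nu)"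
    by (auto simp: has_caputo_derivative_def)
  have dfg: "\<forall>s\<in>{0<..<t}. (\<lambda>x. f x - g x) differentiable (at s)"
    using df dg by (auto intro: differentiable_diff)
  have I: "((\<lambda>s. deriv (\<lambda>x. f x - g x) s * (t - s) powr (- nu)) has_integral I1 - I2) {0..t}"
  proof (rule has_integral_spike_finite[of "{0, t}", OF _ _ has_integral_diff[OF I1 I2]])
    fix s assume s: "s \<in> {0..t} - {0, t}"
    then have "s \<in> {0<..<t}" by auto
    then have "f differentiable at s" "g differentiable at s" using df dg by auto
    then have "f field_differentiable at s" "g field_differentiable at s"
      unfolding field_differentiable_def using real_differentiable_def by blast+
    then show "deriv (\<lambda>x. f x - g x) s * (t - s) powr (- nu) = deriv f s * (t - s) powr (- nu) - deriv g s * (t - s) powr (- nu)"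
      by (simp add: left_diff_distrib)
  qed simp
  show ?thesis using False dfg I D1 D2 by (auto simp: has_caputo_derivative_def diff_divide_distrib)
qed

lemma caputo_zero: "has_caputo_derivative nu (\<lambda>x. 0) t 0"
  by (auto simp: has_caputo_derivative_def intro!: exI[of _ 0])

lemma caputo_neg:
  assumes f: "has_caputo_derivative nu f t D" and t: "t > 0"
  shows "has_caputo_derivative nu (\<lambda>x. - f x) t (- D)"
  using caputo_diff[OF caputo_zero f t] by simp


lemma caputo_max_principle:
  fixes d :: "real \<Rightarrow> real"
  assumes nu: "0 < nu" "nu < 1" and L: "L \<ge> 0"
    and cont: "continuous_on {0..} d" and d0: "d 0 = 0"
    and sys: "\<And>t. t > 0 \<Longrightarrow> has_caputo_derivative nu d t (- L * d t)"
    and T: "T \<ge> 0"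
  shows "d T \<le> 0"
proof (rule ccontr)
  assume "\<not> d T \<le> 0"
  then have dT: "d T > 0" by simp
  have contT: "continuous_on {0..T} d" by (rule continuous_on_subset[OF cont]) auto
  obtain t0 where t0: "t0 \<in> {0..T}" and mx: "\<forall>y\<in>{0..T}. d y \<le> d t0"
    using continuous_attains_sup[OF _ _ contT] T by auto
  have dt0: "d t0 > 0" using mx T dT by force
  have t0p: "t0 > 0" using t0 dt0 d0 by (cases "t0 = 0") auto
  have mx0: "\<forall>y\<in>{0..t0}. d y \<le> d t0" using mx t0 by auto
  from sys[OF t0p] nu obtain I where dif: "\<forall>s\<in>{0<..<t0}. d differentiable (at s)"
    and I: "((\<lambda>s. deriv d s * (t0 - s) powr (- nu)) has_integral I) {0..t0}"
    and DI: "- L * d t0 = I / Gamma (1 - nu)"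
    by (auto simp: has_caputo_derivative_def)
  from sys[of "t0 + 1"] t0p nu have "d differentiable (at t0)" by (auto simp: has_caputo_derivative_def)
  then obtain D0 where D0: "(d has_real_derivative D0) (at t0)" using real_differentiable_def by blast
  define f where "f s = deriv d s * (t0 - s) powr (- nu)" for s
  define F where "F a = integral {0..a} f" for a
  have fint: "f integrable_on {0..t0}" using I unfolding f_def[abs_def] by blast
  have FI: "F t0 = I" using I unfolding F_def f_def[abs_def] by (rule integral_unique)
  have Fcont: "continuous_on {0..t0} F" unfolding F_def by (rule indefinite_integral_continuous_1[OF fint])
  have lim1: "(F \<longlongrightarrow> I) (at_left t0)"
  proof -
    have "(F \<longlongrightarrow> F t0) (at t0 within {0..t0})"
      using Fcont t0p unfolding continuous_on_def by auto
    then show ?thesis unfolding FI at_within_Icc_at_left[OF t0p] .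
  qed
  define g where "g a = (d a - d t0) * (t0 - a) powr (- nu)" for a
  have lim2: "(g \<longlongrightarrow> 0) (at_left t0)"
  proof -
    have "((\<lambda>a. (d a - d t0) / (a - t0)) \<longlongrightarrow> D0) (at t0)"
      using D0 has_field_derivative_iff by blast
    then have q: "((\<lambda>a. (d a - d t0) / (a - t0)) \<longlongrightarrow> D0) (at_left t0)"
      by (rule tendsto_within_subset) simp
    have "((\<lambda>a. (t0 - a) powr (1 - nu)) \<longlongrightarrow> (t0 - t0) powr (1 - nu)) (at_left t0)"
    proof (rule tendsto_powr')
      show "((\<lambda>a. t0 - a) \<longlongrightarrow> t0 - t0) (at_left t0)"
        by (intro tendsto_intros)
      show "((\<lambda>a. 1 - nu) \<longlongrightarrow> 1 - nu) (at_left t0)" by simp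
      have "eventually (\<lambda>a. a \<in> {0<..<t0}) (at_left t0)" by (rule eventually_at_left_real[OF t0p])
      then have "eventually (\<lambda>a. t0 - a \<ge> 0) (at_left t0)" by eventually_elim auto
      then show "t0 - t0 \<noteq> 0 \<or> 0 < 1 - nu \<and> eventually (\<lambda>a. t0 - a \<ge> 0) (at_left t0)"
        using nu by auto
    qed
    then have p: "((\<lambda>a. (t0 - a) powr (1 - nu)) \<longlongrightarrow> 0) (at_left t0)" by simp
    have "((\<lambda>a. - ((d a - d t0) / (a - t0) * (t0 - a) powr (1 - nu))) \<longlongrightarrow> - (D0 * 0)) (at_left t0)"
      by (intro tendsto_minus tendsto_mult q p)
    moreover have "eventually (\<lambda>a. - ((d a - d t0) / (a - t0) * (t0 - a) powr (1 - nu)) = g a) (at_left t0)"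
    proof -
      have "eventually (\<lambda>a. a \<in> {0<..<t0}) (at_left t0)" by (rule eventually_at_left_real[OF t0p])
      then show ?thesis
      proof eventually_elim
        case (elim a)
        then have ap: "t0 - a > 0" by auto
        have "(t0 - a) powr (1 - nu) = (t0 - a) powr (1 + (- nu))" by simp
        also have "\<dots> = (t0 - a) powr 1 * (t0 - a) powr (- nu)" by (rule powr_add)
        also have "\<dots> = (t0 - a) * (t0 - a) powr (- nu)" using ap by simp
        finally have e: "(t0 - a) powr (1 - nu) = (t0 - a) * (t0 - a) powr (- nu)" .
        have "a - t0 \<noteq> 0" using ap by simp
        then show ?case unfolding e g_def by (simp add: field_simps)
      qed
    qed
    ultimately show ?thesis by (simp add: tendsto_cong)
  qed
  have ineq: "F a \<ge> g a + d t0 * t0 powr (- nu)" if a: "a \<in> {0<..<t0}" for a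
  proof -
    define h' where "h' s = f s + (d s - d t0) * (nu * (t0 - s) powr (- nu - 1))" for s
    have gc: "continuous_on {0..a} g"
    proof -
      have "continuous_on {0..a} d" by (rule continuous_on_subset[OF cont]) auto
      moreover have "continuous_on {0..a} (\<lambda>s. (t0 - s) powr (- nu))"
        using a by (intro continuous_intros) auto
      ultimately show ?thesis using a unfolding g_def[abs_def] by (intro continuous_intros) auto
    qed
    have gd: "(g has_vector_derivative h' s) (at s)" if s: "s \<in> {0<..<a}" for s
    proof -
      have "d differentiable (at s)" using dif s a by auto
      then have dd: "(d has_real_derivative deriv d s) (at s)"
        using DERIV_deriv_iff_real_differentiable by blast
      have tp: "t0 - s > 0" using s a by auto
      have pd: "((\<lambda>s. (t0 - s) powr (- nu)) has_real_derivative (- nu * (t0 - s) powr (- nu - 1)) * (0 - 1)) (at s)"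
      proof -
        have p1: "((\<lambda>z. z powr (- nu)) has_real_derivative (- nu * (t0 - s) powr (- nu - 1))) (at (t0 - s))"
          using has_real_derivative_powr[OF tp, of "- nu"] by simp
        have p2: "((\<lambda>s. t0 - s) has_real_derivative (0 - 1)) (at s)" by (intro derivative_intros)
        show ?thesis using DERIV_chain2[of "\<lambda>z. z powr (- nu)" _ "\<lambda>s. t0 - s", OF p1 p2] by simp
      qed
      have "(g has_real_derivative deriv d s * (t0 - s) powr (- nu) + (d s - d t0) * ((- nu * (t0 - s) powr (- nu - 1)) * (0 - 1))) (at s)"
        unfolding g_def[abs_def] by (rule DERIV_cong[OF DERIV_mult[OF DERIV_diff[OF dd DERIV_const] pd]]) (simp add: algebra_simps)
      then show ?thesis unfolding has_real_derivative_iff_has_vector_derivative[symmetric] h'_def f_def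
        by simp
    qed
    have H: "(h' has_integral g a - g 0) {0..a}"
      by (rule fundamental_theorem_of_calculus_interior[OF _ gc gd]) (use a in auto)
    have fa: "(f has_integral F a) {0..a}"
      unfolding F_def by (rule integrable_integral[OF integrable_subinterval_real[OF fint]]) (use a in auto)
    have "g a - g 0 \<le> F a"
    proof (rule has_integral_le[OF H fa])
      fix s assume s: "s \<in> {0..a}"
      have "d s - d t0 \<le> 0" using mx0 s a by auto
      moreover have "nu * (t0 - s) powr (- nu - 1) \<ge> 0" using nu by simp
      ultimately have "(d s - d t0) * (nu * (t0 - s) powr (- nu - 1)) \<le> 0"
        by (rule mult_nonpos_nonneg)
      then show "h' s \<le> f s" by (simp add: h'_def)
    qed
    moreover have "g 0 = - d t0 * t0 powr (- nu)" by (simp add: g_def d0)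
    ultimately show ?thesis by simp
  qed
  have "0 + d t0 * t0 powr (- nu) \<le> I"
  proof (rule tendsto_le[OF _ lim1])
    show "((\<lambda>a. g a + d t0 * t0 powr (- nu)) \<longlongrightarrow> 0 + d t0 * t0 powr (- nu)) (at_left t0)"
      by (intro tendsto_intros lim2)
    have "eventually (\<lambda>a. a \<in> {0<..<t0}) (at_left t0)" by (rule eventually_at_left_real[OF t0p])
    then show "eventually (\<lambda>a. g a + d t0 * t0 powr (- nu) \<le> F a) (at_left t0)"
      by eventually_elim (rule ineq)
  qed simp
  moreover have "d t0 * t0 powr (- nu) > 0" using dt0 t0p by simp
  ultimately have Ip: "I > 0" by simp
  have "Gamma (1 - nu) > 0" using nu by (intro Gamma_real_pos) auto
  then have "I / Gamma (1 - nu) > 0" using Ip by simp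
  moreover have "- L * d t0 \<le> 0" using L dt0 by simp
  ultimately show False using DI by simp
qed


lemma ode_unique:
  fixes d :: "real \<Rightarrow> real"
  assumes cont: "continuous_on {0..} d" and d0: "d 0 = 0"
    and sys: "\<And>t. t > 0 \<Longrightarrow> (d has_real_derivative (- L * d t)) (at t)"
    and T: "T \<ge> 0"
  shows "d T = 0"
proof (cases "T = 0")
  case True then show ?thesis using d0 by simp
next
  case False
  then have Tp: "T > 0" using T by simp
  define g where "g t = exp (L * t) * d t" for t
  have "g T = g 0"
  proof (rule DERIV_isconst_end[OF Tp])
    show "continuous_on {0..T} g" unfolding g_def[abs_def]
      by (intro continuous_intros continuous_on_subset[OF cont]) auto
    fix x assume x: "0 < x" "x < T"
    have "(g has_real_derivative (L * exp (L * x)) * d x + exp (L * x) * (- L * d x)) (at x)"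
      unfolding g_def[abs_def]
      by (rule DERIV_cong[OF DERIV_mult[OF _ sys[OF x(1)]]]) (auto intro!: derivative_eq_intros simp: algebra_simps)
    then show "(g has_real_derivative 0) (at x)" by (simp add: algebra_simps)
  qed
  then show ?thesis by (simp add: g_def d0)
qed

lemma caputo_unique:
  fixes d :: "real \<Rightarrow> real"
  assumes nu: "0 < nu" "nu \<le> 1" and L: "L \<ge> 0"
    and cont: "continuous_on {0..} d" and d0: "d 0 = 0"
    and sys: "\<And>t. t > 0 \<Longrightarrow> has_caputo_derivative nu d t (- L * d t)"
    and T: "T \<ge> 0"
  shows "d T = 0"
proof (cases "nu = 1")
  case True
  then show ?thesis using ode_unique[OF cont d0 _ T, of L] sys by (auto simp: has_caputo_derivative_def)
next
  case False
  then have nu1: "nu < 1" using nu by simp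
  have a: "d T \<le> 0" by (rule caputo_max_principle[OF nu(1) nu1 L cont d0 sys T])
  have "- d T \<le> 0"
  proof (rule caputo_max_principle[OF nu(1) nu1 L, of "\<lambda>x. - d x"])
    show "continuous_on {0..} (\<lambda>x. - d x)" by (intro continuous_intros cont)
    show "- d 0 = 0" using d0 by simp
    fix t :: real assume t: "t > 0"
    show "has_caputo_derivative nu (\<lambda>x. - d x) t (- L * - d t)"
      using caputo_neg[OF sys[OF t] t] by simp
  qed (rule T)
  then show ?thesis using a by simp
qed

context fsys begin

lemma Aop_diff_eq:
  assumes "\<And>i. i < j \<Longrightarrow> f i = g i"
  shows "Aop k lam f j - Aop k lam g j = - Lam k lam * (f j - g j)"
proof -
  have "(\<Sum>r=1..m. lam r * f (j - r)) = (\<Sum>r=1..m. lam r * g (j - r))" if "m \<le> j" for m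
    by (rule sum.cong) (use that assms in auto)
  then show ?thesis by (simp add: Aop_def algebra_simps)
qed

lemma p_eq_qq:
  fixes p :: "nat \<Rightarrow> real \<Rightarrow> real"
  assumes pc: "\<And>j. continuous_on {0..} (p j)"
    and pinit: "\<And>j. p j 0 = (if j = 0 then 1 else 0)"
    and psys: "\<And>j t. t > 0 \<Longrightarrow> has_caputo_derivative nu (p j) t (Aop k lam (\<lambda>i. p i t) j)"
  shows "T \<ge> 0 \<Longrightarrow> p j T = qq j T"
proof (induction j arbitrary: T rule: less_induct)
  case (less j)
  define d where "d t = p j t - qq j t" for t
  have "d T = 0"
  proof (rule caputo_unique[OF nu_pos nu_le L_nonneg, of d])
    show "continuous_on {0..} d" unfolding d_def[abs_def] by (intro continuous_intros pc qq_cont)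
    show "d 0 = 0" by (simp add: d_def pinit qq_0)
    fix t :: real assume t: "t > 0"
    have "has_caputo_derivative nu d t (Aop k lam (\<lambda>i. p i t) j - Aop k lam (\<lambda>i. qq i t) j)"
      unfolding d_def[abs_def] by (rule caputo_diff[OF psys[OF t] qq_caputo[OF t] t])
    moreover have "Aop k lam (\<lambda>i. p i t) j - Aop k lam (\<lambda>i. qq i t) j = - Lam k lam * d t"
      unfolding d_def by (rule Aop_diff_eq) (use less.IH t in auto)
    ultimately show "has_caputo_derivative nu d t (- Lam k lam * d t)" by simp
  qed (rule less.prems)
  then show ?case by (simp add: d_def)
qed

end


lemma has_sum_finite_support:
  fixes f :: "nat \<Rightarrow> real"
  assumes "\<And>j. j > D \<Longrightarrow> f j = 0"
  shows "(f has_sum (\<Sum>j\<le>D. f j)) UNIV"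
proof -
  have "(f has_sum (\<Sum>j\<le>D. f j)) {..D}" by (rule has_sum_finite) simp
  moreover have "(f has_sum (\<Sum>j\<le>D. f j)) {..D} \<longleftrightarrow> (f has_sum (\<Sum>j\<le>D. f j)) UNIV"
    by (rule has_sum_cong_neutral) (use assms in auto)
  ultimately show ?thesis by simp
qed

context fsys begin

lemma cc_zero: "j > degree (Pp k lam ^ n) \<Longrightarrow> cc n j = 0"
  unfolding cc_def by (rule coeff_eq_0)

lemma mgf_sums:
  assumes t: "t \<ge> 0" and y: "y > 0"
  shows "(\<lambda>j. y ^ j * qq j t) sums mittag_leffler nu 1 (poly (Pp k lam) y * t powr nu)"
proof -
  define x where "x = t powr nu"
  have x: "x \<ge> 0" by (simp add: x_def)
  define u where "u = (\<lambda>(n, j). cc n j * y ^ j * x ^ n / Gamma (nu * real n + 1))"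
  define D where "D n = degree (Pp k lam ^ n)" for n
  define W where "W = poly (Wp k lam) y"
  have Gp: "Gamma (nu * real n + 1) > 0" for n by (rule Gpos)
  define V where "V n = (\<Sum>j\<le>D n. norm (u (n, j)))" for n
  have Vhas: "((\<lambda>j. norm (u (n, j))) has_sum V n) UNIV" for n
    unfolding V_def by (rule has_sum_finite_support) (simp add: u_def cc_zero D_def)
  have Vbound: "V n \<le> (W * x) ^ n / Gamma (nu * real n + 1)" for n
  proof -
    have "V n = (\<Sum>j\<le>D n. \<bar>cc n j\<bar> * y ^ j) * x ^ n / Gamma (nu * real n + 1)"
      unfolding V_def u_def using x y Gp[of n]
      by (simp add: sum_distrib_right sum_divide_distrib abs_mult)
    also have "\<dots> \<le> W ^ n * x ^ n / Gamma (nu * real n + 1)"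
      unfolding W_def cc_def using Gp[of n] x y
      by (intro divide_right_mono mult_right_mono coeff_Pp_sum_bound[OF lam_pos]) auto
    finally show ?thesis by (simp add: power_mult_distrib)
  qed
  have Wnn: "W \<ge> 0" unfolding W_def poly_Wp using y L_nonneg lam_pos
    by (intro add_nonneg_nonneg sum_nonneg) (auto intro!: mult_nonneg_nonneg less_imp_le)
  have Vsum: "summable V"
  proof (rule summable_comparison_test'[OF ml_summable[OF nu_pos, of "W * x"]])
    fix n
    have "V n \<ge> 0" unfolding V_def by (intro sum_nonneg) auto
    then show "norm (V n) \<le> \<bar>W * x\<bar> ^ n / Gamma (nu * real n + 1)"
      using Vbound[of n] Wnn x by simp
  qed
  have Vnn: "V n \<ge> 0" for n unfolding V_def by (intro sum_nonneg) auto
  have "V summable_on UNIV" using Vsum Vnn summable_on_UNIV_nonneg_real_iff by blast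
  then have vS: "(\<lambda>p. norm (u p)) summable_on Sigma UNIV (\<lambda>_. UNIV)"
    by (intro summable_on_SigmaI[OF _ _]) (use Vhas in \<open>auto simp: case_prod_beta\<close>)
  then have uS: "u summable_on UNIV \<times> UNIV"
    using summable_on_iff_abs_summable_on_real by blast
  define S where "S = infsum u (UNIV \<times> UNIV)"
  have uH: "(u has_sum S) (UNIV \<times> UNIV)" unfolding S_def using uS by (rule has_sum_infsum)
  define R where "R n = (poly (Pp k lam) y * x) ^ n / Gamma (nu * real n + 1)" for n
  have Rhas: "((\<lambda>j. u (n, j)) has_sum R n) UNIV" for n
  proof -
    have "((\<lambda>j. u (n, j)) has_sum (\<Sum>j\<le>D n. u (n, j))) UNIV"
      by (rule has_sum_finite_support) (simp add: u_def cc_zero D_def)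
    moreover have "(\<Sum>j\<le>D n. u (n, j)) = R n"
    proof -
      have "(\<Sum>j\<le>D n. u (n, j)) = (\<Sum>j\<le>D n. cc n j * y ^ j) * x ^ n / Gamma (nu * real n + 1)"
        unfolding u_def by (simp add: sum_distrib_right sum_divide_distrib)
      also have "(\<Sum>j\<le>D n. cc n j * y ^ j) = poly (Pp k lam ^ n) y"
        unfolding cc_def D_def by (rule poly_altdef[symmetric])
      finally show ?thesis unfolding R_def by (simp add: poly_power power_mult_distrib)
    qed
    ultimately show ?thesis by simp
  qed
  have "(R has_sum S) UNIV" by (rule has_sum_Sigma'[OF uH[unfolded UNIV_Times_UNIV[symmetric]]]) (use Rhas in auto)
  then have "R sums S" by (rule has_sum_imp_sums)
  then have MLv: "mittag_leffler nu 1 (poly (Pp k lam) y * x) = S"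
    unfolding mittag_leffler_def R_def by (simp add: sums_iff)
  have Chas: "((\<lambda>n. u (n, j)) has_sum (y ^ j * qq j t)) UNIV" for j
  proof -
    have "(\<lambda>n. y ^ j * (aa j n * x ^ n)) sums (y ^ j * qq j t)"
      unfolding qq_def QQ_def x_def[symmetric] by (intro sums_mult summable_sums aa_summable)
    moreover have "summable (\<lambda>n. norm (y ^ j * (aa j n * x ^ n)))"
      using summable_mult[OF aa_summable_abs[of j x], of "\<bar>y ^ j\<bar>"] by (simp add: abs_mult)
    ultimately have "((\<lambda>n. y ^ j * (aa j n * x ^ n)) has_sum (y ^ j * qq j t)) UNIV"
      by (intro norm_summable_imp_has_sum)
    then show ?thesis by (simp add: u_def aa_def mult_ac)
  qed
  have uH': "((\<lambda>(j, n). u (n, j)) has_sum S) (UNIV \<times> UNIV)"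
    using uH has_sum_swap by blast
  have "((\<lambda>j. y ^ j * qq j t) has_sum S) UNIV"
    by (rule has_sum_Sigma'[OF uH'[unfolded UNIV_Times_UNIV[symmetric]]]) (use Chas in auto)
  then show ?thesis using MLv by (simp add: x_def has_sum_imp_sums)
qed

end

lemma nat_rv_integral:
  fixes X :: "'a \<Rightarrow> nat" and f :: "nat \<Rightarrow> real"
  assumes prob: "prob_space M" and X: "X \<in> measurable M (count_space UNIV)"
    and sm: "summable (\<lambda>j. \<bar>f j\<bar> * measure M {\<omega> \<in> space M. X \<omega> = j})"
  shows "integrable M (\<lambda>\<omega>. f (X \<omega>)) \<and> (\<integral>\<omega>. f (X \<omega>) \<partial>M) = (\<Sum>j. f j * measure M {\<omega> \<in> space M. X \<omega> = j})"
proof -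
  interpret prob_space M by (rule prob)
  define A where "A j = {\<omega> \<in> space M. X \<omega> = j}" for j
  have Asets: "A j \<in> sets M" for j
    unfolding A_def using X by (auto intro: measurable_sets_Collect)
  define F where "F j \<omega> = f j * indicator (A j) \<omega>" for j \<omega>
  have Fint: "integrable M (F j)" for j
    unfolding F_def using Asets[of j] by (intro integrable_mult_right integrable_real_indicator) (auto simp: less_top[symmetric])
  have NF: "(\<integral>\<omega>. norm (F j \<omega>) \<partial>M) = \<bar>f j\<bar> * measure M (A j)" for j
  proof -
    have "(\<integral>\<omega>. norm (F j \<omega>) \<partial>M) = (\<integral>\<omega>. \<bar>f j\<bar> * indicator (A j) \<omega> \<partial>M)"
      by (rule Bochner_Integration.integral_cong) (auto simp: F_def indicator_def)
    also have "\<dots> = \<bar>f j\<bar> * measure M (A j)" using Asets[of j] by simp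
    finally show ?thesis .
  qed
  have single: "(\<lambda>j. F j \<omega>) = (\<lambda>j. if j = X \<omega> then f j else 0)" if "\<omega> \<in> space M" for \<omega>
    using that by (auto simp: F_def A_def indicator_def)
  have AE: "AE \<omega> in M. summable (\<lambda>j. norm (F j \<omega>))"
  proof (rule AE_I2)
    fix \<omega> assume w: "\<omega> \<in> space M"
    have "(\<lambda>j. norm (F j \<omega>)) = (\<lambda>j. if j = X \<omega> then norm (f j) else 0)"
      using single[OF w] by (auto simp: fun_eq_iff dest: fun_cong)
    then show "summable (\<lambda>j. norm (F j \<omega>))" using sums_single summable_def by metis
  qed
  have sN: "summable (\<lambda>j. \<integral>\<omega>. norm (F j \<omega>) \<partial>M)" unfolding NF A_def using sm by simp
  have eq: "(\<Sum>j. F j \<omega>) = f (X \<omega>)" if "\<omega> \<in> space M" for \<omega>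
    unfolding single[OF that] using sums_single[of "X \<omega>" f] by (simp add: sums_iff)
  have I1: "integrable M (\<lambda>\<omega>. \<Sum>j. F j \<omega>)" by (rule integrable_suminf[OF Fint AE sN])
  have I2: "(\<integral>\<omega>. (\<Sum>j. F j \<omega>) \<partial>M) = (\<Sum>j. \<integral>\<omega>. F j \<omega> \<partial>M)" by (rule integral_suminf[OF Fint AE sN])
  have IF: "(\<integral>\<omega>. F j \<omega> \<partial>M) = f j * measure M (A j)" for j
    unfolding F_def using Asets[of j] by simp
  have "integrable M (\<lambda>\<omega>. f (X \<omega>))"
  proof -
    have "integrable M (\<lambda>\<omega>. f (X \<omega>)) = integrable M (\<lambda>\<omega>. \<Sum>j. F j \<omega>)"
      by (rule Bochner_Integration.integrable_cong) (simp_all add: eq)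
    then show ?thesis using I1 by simp
  qed
  moreover have "(\<integral>\<omega>. f (X \<omega>) \<partial>M) = (\<integral>\<omega>. (\<Sum>j. F j \<omega>) \<partial>M)"
    by (rule Bochner_Integration.integral_cong) (simp_all add: eq)
  ultimately show ?thesis using I2 IF by (simp add: A_def)
qed


theorem proposition2p1:
  fixes \<nu> :: real and k :: nat and lam :: "nat \<Rightarrow> real"
    and M :: "'a measure" and N :: "real \<Rightarrow> 'a \<Rightarrow> nat"
    and p :: "nat \<Rightarrow> real \<Rightarrow> real"
  assumes nu: "0 < \<nu>" "\<nu> \<le> 1"
    and lam_pos: "\<And>r. r \<in> {1..k} \<Longrightarrow> lam r > 0"
    and prob: "prob_space M"
    and rv: "\<And>t. t \<ge> 0 \<Longrightarrow> N t \<in> measurable M (count_space UNIV)"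
    and p_def: "\<And>j t. t \<ge> 0 \<Longrightarrow> p j t = measure M {\<omega> \<in> space M. N t \<omega> = j}"
    and cont: "\<And>j. continuous_on {0..} (p j)"
    and system: "\<And>j t. t > 0 \<Longrightarrow>
        has_caputo_derivative \<nu> (p j) t
          ((if j < k then (\<Sum>r=1..j. lam r * p (j - r) t) else (\<Sum>r=1..k. lam r * p (j - r) t))
           - (\<Sum>r=1..k. lam r) * p j t)"
    and init0: "p 0 0 = 1"
    and init: "\<And>j. j \<ge> 1 \<Longrightarrow> p j 0 = 0"
    and t: "t \<ge> 0"
  shows "integrable M (\<lambda>\<omega>. exp (s * real (N t \<omega>))) \<and>
         (\<integral>\<omega>. exp (s * real (N t \<omega>)) \<partial>M)
           = mittag_leffler \<nu> 1 ((\<Sum>j=1..k. lam j * (exp (real j * s) - 1)) * t powr \<nu>)"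
proof -
  interpret fsys \<nu> k lam using nu lam_pos by unfold_locales auto
  have psys: "has_caputo_derivative \<nu> (p j) t' (Aop k lam (\<lambda>i. p i t') j)" if "t' > 0" for j t'
    using system[OF that, of j] by (simp add: Aop_def Lam_def)
  have pinit: "p j 0 = (if j = 0 then 1 else 0)" for j
    using init0 init[of j] by auto
  have pq: "p j t = qq j t" for j
    by (rule p_eq_qq[OF cont pinit psys t])
  have S: "(\<lambda>j. exp s ^ j * qq j t) sums mittag_leffler \<nu> 1 (poly (Pp k lam) (exp s) * t powr \<nu>)"
    by (rule mgf_sums[OF t]) simp
  have meq: "measure M {\<omega> \<in> space M. N t \<omega> = j} = qq j t" for j
    using p_def[OF t, of j] pq[of j] by simp
  have fe: "exp (s * real j) = exp s ^ j" for j
    by (simp add: exp_of_nat_mult[symmetric] mult.commute)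
  have sm: "summable (\<lambda>j. \<bar>exp (s * real j)\<bar> * measure M {\<omega> \<in> space M. N t \<omega> = j})"
    using S unfolding meq fe by (simp add: sums_iff)
  have R: "integrable M (\<lambda>\<omega>. exp (s * real (N t \<omega>))) \<and>
       (\<integral>\<omega>. exp (s * real (N t \<omega>)) \<partial>M) = (\<Sum>j. exp (s * real j) * measure M {\<omega> \<in> space M. N t \<omega> = j})"
    by (rule nat_rv_integral[OF prob rv[OF t] sm])
  have "(\<Sum>j. exp (s * real j) * measure M {\<omega> \<in> space M. N t \<omega> = j}) = mittag_leffler \<nu> 1 (poly (Pp k lam) (exp s) * t powr \<nu>)"
    using S unfolding meq fe by (simp add: sums_iff)
  moreover have "poly (Pp k lam) (exp s) = (\<Sum>j=1..k. lam j * (exp (real j * s) - 1))"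
    by (simp add: poly_Pp Lam_def right_diff_distrib sum_subtractf exp_of_nat_mult[symmetric])
  ultimately show ?thesis using R by simp
qed

end
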